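(* For all $\alpha\in\mathbb R$ and $\rho>1$, $$\lim_{n\to\infty}\max_{Q\in\mathcal P_n(\rho)}D_{\mathrm A}^{(\alpha)}(U_n\|Q)=\Delta(\alpha,\rho),$$ where $\Delta(\alpha,\rho)=\frac1{\alpha(\alpha-1)}\Big[\frac{((\rho^\alpha-1)/\alpha)^{\alpha}((\rho-\rho^\alpha)/(1-\alpha))^{1-\alpha}}{\rho-1}-1\Big]$ for $\alpha\notin\{0,1\}$ and $\Delta(1,\rho)=\Delta(0,\rho)=\frac{\rho\ln\rho}{\rho-1}-\ln\frac{e\rho\ln\rho}{\rho-1}$.
   Context: $\mathcal P_n(\rho)$: probability mass functions on $\{1,\dots,n\}$ with all masses positive and max/min mass ratio at most $\rho$; $U_n$ uniform on $\{1,\dots,n\}$. $D_{\mathrm A}^{(\alpha)}(P\|Q)=\sum_xQ(x)u_\alpha(P(x)/Q(x))$ with $u_\alpha(t)=\frac{t^\alpha-\alpha(t-1)-1}{\alpha(\alpha-1)}$ ($\alpha\notin\{0,1\}$), $u_1(t)=t\ln t+1-t$, $u_0(t)=-\ln t$. *)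

theory Defs
  imports Complex_Main
begin

definition Pn :: "nat \<Rightarrow> real \<Rightarrow> (nat \<Rightarrow> real) set" where
  "Pn n \<rho> = {Q. (\<forall>x\<in>{1..n}. Q x > 0) \<and> (\<forall>x. x \<notin> {1..n} \<longrightarrow> Q x = 0)
       \<and> (\<Sum>x\<in>{1..n}. Q x) = 1
       \<and> Max (Q ` {1..n}) / Min (Q ` {1..n}) \<le> \<rho>}"

definition U_unif :: "nat \<Rightarrow> nat \<Rightarrow> real" where
  "U_unif n = (\<lambda>x. if x \<in> {1..n} then 1 / real n else 0)"

definition u_alpha :: "real \<Rightarrow> real \<Rightarrow> real" where
  "u_alpha \<alpha> t =
     (if \<alpha> = 0 then - ln t
      else if \<alpha> = 1 then t * ln t + 1 - t
      else (t powr \<alpha> - \<alpha> * (t - 1) - 1) / (\<alpha> * (\<alpha> - 1)))"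

definition DA :: "real \<Rightarrow> nat \<Rightarrow> (nat \<Rightarrow> real) \<Rightarrow> (nat \<Rightarrow> real) \<Rightarrow> real" where
  "DA \<alpha> n P Q = (\<Sum>x\<in>{1..n}. Q x * u_alpha \<alpha> (P x / Q x))"

definition Delta :: "real \<Rightarrow> real \<Rightarrow> real" where
  "Delta \<alpha> \<rho> =
     (if \<alpha> = 0 \<or> \<alpha> = 1 then \<rho> * ln \<rho> / (\<rho> - 1) - ln (exp 1 * \<rho> * ln \<rho> / (\<rho> - 1))
      else (1 / (\<alpha> * (\<alpha> - 1))) *
        ((((\<rho> powr \<alpha> - 1) / \<alpha>) powr \<alpha> * ((\<rho> - \<rho> powr \<alpha>) / (1 - \<alpha>)) powr (1 - \<alpha>))
           / (\<rho> - 1) - 1))"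

end

theory Submission
  imports Defs "HOL-Analysis.Analysis"
begin

lemma bern_convex:
  fixes x s :: real
  assumes x: "x > 0" and s: "s \<le> 0 \<or> s \<ge> 1"
  shows "1 + s * (x - 1) \<le> x powr s"
proof -
  have "s * 1 powr (s - 1) * (x - 1) \<le> x powr s - 1 powr s"
    apply (rule f''_imp_f'[of "{0<..}" "\<lambda>x. x powr s" "\<lambda>x. s * x powr (s - 1)"
        "\<lambda>x. s * ((s - 1) * x powr (s - 1 - 1))"])
    using x s
    by (auto intro!: derivative_eq_intros mult_nonneg_nonneg simp: mult_le_0_iff zero_le_mult_iff)
  then show ?thesis by simp
qed

lemma bern_concave:
  fixes x s :: real
  assumes x: "x > 0" and s: "0 \<le> s" "s \<le> 1"
  shows "x powr s \<le> 1 + s * (x - 1)"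
proof -
  have "(-(s * 1 powr (s - 1))) * (x - 1) \<le> - (x powr s) - (- (1 powr s))"
    apply (rule f''_imp_f'[of "{0<..}" "\<lambda>x. -(x powr s)" "\<lambda>x. -(s * x powr (s - 1))"
        "\<lambda>x. -(s * ((s - 1) * x powr (s - 1 - 1)))"])
    using x s
    by (auto intro!: derivative_eq_intros simp: mult_le_0_iff zero_le_mult_iff)
  then show ?thesis by simp
qed

definition phi :: "real \<Rightarrow> real \<Rightarrow> real" where
  "phi \<alpha> q = (if \<alpha> = 0 then q * ln q else if \<alpha> = 1 then q - 1 - ln q
     else (q powr (1 - \<alpha>) - \<alpha> + (\<alpha> - 1) * q) / (\<alpha> * (\<alpha> - 1)))"

lemma phi_eq:
  assumes "q > 0"
  shows "q * u_alpha \<alpha> (1 / q) = phi \<alpha> q"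
proof -
  have "q * (1/q) powr \<alpha> = q powr (1 - \<alpha>)"
    using assms by (simp add: powr_divide powr_diff)
  then show ?thesis using assms
    by (auto simp: u_alpha_def phi_def ln_div field_simps)
qed

lemma convex_phi: "convex_on {0<..} (phi \<alpha>)"
proof (cases "\<alpha> = 0 \<or> \<alpha> = 1")
  case True
  then show ?thesis
  proof
    assume a: "\<alpha> = 0"
    show ?thesis unfolding phi_def a
      by (rule f''_ge0_imp_convex[where f' = "\<lambda>x. ln x + 1" and f'' = "\<lambda>x. 1 / x"])
         (auto intro!: derivative_eq_intros)
  next
    assume a: "\<alpha> = 1"
    show ?thesis unfolding phi_def a
      by (rule f''_ge0_imp_convex[where f' = "\<lambda>x. 1 - 1 / x" and f'' = "\<lambda>x. 1 / x^2"])
         (auto intro!: derivative_eq_intros simp: power2_eq_square field_simps)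
  qed
next
  case False
  then have a: "\<alpha> \<noteq> 0" "\<alpha> \<noteq> 1" by auto
  have "convex_on {0<..} (\<lambda>q. (q powr (1 - \<alpha>) - \<alpha> + (\<alpha> - 1) * q) / (\<alpha> * (\<alpha> - 1)))"
  proof (rule f''_ge0_imp_convex[where f' = "\<lambda>x. ((1 - \<alpha>) * x powr (- \<alpha>) + (\<alpha> - 1)) / (\<alpha> * (\<alpha> - 1))"
          and f'' = "\<lambda>x. x powr (- \<alpha> - 1)"])
    fix x :: real assume x: "x \<in> {0<..}"
    show "((\<lambda>q. (q powr (1 - \<alpha>) - \<alpha> + (\<alpha> - 1) * q) / (\<alpha> * (\<alpha> - 1))) has_real_derivative
       ((1 - \<alpha>) * x powr (- \<alpha>) + (\<alpha> - 1)) / (\<alpha> * (\<alpha> - 1))) (at x)"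
      using x a by (auto intro!: derivative_eq_intros)
    have "((\<lambda>x. ((1 - \<alpha>) * x powr (- \<alpha>) + (\<alpha> - 1)) / (\<alpha> * (\<alpha> - 1))) has_real_derivative
       ((1 - \<alpha>) * ((- \<alpha>) * x powr (- \<alpha> - 1)) + 0) / (\<alpha> * (\<alpha> - 1))) (at x)"
      using x a by (auto intro!: derivative_eq_intros)
    moreover have "((1 - \<alpha>) * ((- \<alpha>) * x powr (- \<alpha> - 1)) + 0) / (\<alpha> * (\<alpha> - 1)) = x powr (- \<alpha> - 1)"
      using a by (simp add: field_simps)
    ultimately show "((\<lambda>x. ((1 - \<alpha>) * x powr (- \<alpha>) + (\<alpha> - 1)) / (\<alpha> * (\<alpha> - 1))) has_real_derivative
       x powr (- \<alpha> - 1)) (at x)" by simp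
    show "0 \<le> x powr (- \<alpha> - 1)" by simp
  qed simp
  then show ?thesis using a unfolding phi_def by simp
qed


definition Hc :: "real \<Rightarrow> real \<Rightarrow> real \<Rightarrow> real" where
  "Hc \<alpha> \<rho> c = ((c * \<rho> - 1) * phi \<alpha> c + (1 - c) * phi \<alpha> (c * \<rho>)) / (c * (\<rho> - 1))"

lemma div_eqI: "(d::real) \<noteq> 0 \<Longrightarrow> N = R * d \<Longrightarrow> N / d = R"
  by simp

lemma Hc_1:
  assumes c: "c > 0" and r: "\<rho> > 1"
  shows "Hc 1 \<rho> c = - ln c - (ln \<rho> / (\<rho> - 1)) / c + ln \<rho> / (\<rho> - 1)"
proof -
  have d: "c * (\<rho> - 1) \<noteq> 0" using c r by simp
  define B where "B = ln \<rho> / (\<rho> - 1)"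
  have B: "B * (\<rho> - 1) = ln \<rho>" using r by (simp add: B_def)
  have "(- ln c - B / c + B) * (c * (\<rho> - 1))
     = - ln c * (c * (\<rho> - 1)) - (B / c * c) * (\<rho> - 1) + c * (B * (\<rho> - 1))"
    by (simp add: algebra_simps)
  then have "(- ln c - B / c + B) * (c * (\<rho> - 1))
     = - ln c * (c * (\<rho> - 1)) - ln \<rho> + c * ln \<rho>"
    using c by (simp add: B mult.assoc)
  then have "(- ln c - (ln \<rho> / (\<rho> - 1)) / c + ln \<rho> / (\<rho> - 1)) * (c * (\<rho> - 1))
     = - ln c * (c * (\<rho> - 1)) - ln \<rho> + c * ln \<rho>" by (simp add: B_def)
  then show ?thesis unfolding Hc_def phi_def
    using c r by (intro div_eqI[OF d]) (simp add: ln_mult algebra_simps)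
qed

lemma Hc_0:
  assumes c: "c > 0" and r: "\<rho> > 1"
  shows "Hc 0 \<rho> c = ln c + (1 - c) * \<rho> * (ln \<rho> / (\<rho> - 1))"
proof -
  have d: "c * (\<rho> - 1) \<noteq> 0" using c r by simp
  define B where "B = ln \<rho> / (\<rho> - 1)"
  have B: "B * (\<rho> - 1) = ln \<rho>" using r by (simp add: B_def)
  have "(ln c + (1 - c) * \<rho> * B) * (c * (\<rho> - 1))
     = ln c * (c * (\<rho> - 1)) + c * (1 - c) * \<rho> * (B * (\<rho> - 1))"
    by (simp add: algebra_simps)
  then have "(ln c + (1 - c) * \<rho> * (ln \<rho> / (\<rho> - 1))) * (c * (\<rho> - 1))
     = ln c * (c * (\<rho> - 1)) + c * (1 - c) * \<rho> * ln \<rho>" by (simp add: B B_def)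
  then show ?thesis unfolding Hc_def phi_def
    using c r by (intro div_eqI[OF d]) (simp add: ln_mult algebra_simps)
qed

lemma Hc_gen:
  assumes c: "c > 0" and r: "\<rho> > 1" and a: "\<alpha> \<noteq> 0" "\<alpha> \<noteq> 1"
  shows "Hc \<alpha> \<rho> c = (c powr (- \<alpha>) * (c * (\<rho> - \<rho> powr (1 - \<alpha>)) + \<rho> powr (1 - \<alpha>) - 1) / (\<rho> - 1) - 1)
     / (\<alpha> * (\<alpha> - 1))"
proof -
  have e1: "(c * \<rho>) powr (1 - \<alpha>) = c powr (1 - \<alpha>) * \<rho> powr (1 - \<alpha>)"
    using c r by (simp add: powr_mult)
  have "c powr (1 + - \<alpha>) = c powr 1 * c powr (- \<alpha>)"
    by (rule powr_add)
  then have e2: "c powr (1 - \<alpha>) = c * c powr (- \<alpha>)" using c by simp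
  have d: "c * (\<rho> - 1) \<noteq> 0" using c r by simp
  have d2: "\<alpha> * (\<alpha> - 1) \<noteq> 0" using a by simp
  define p where "p = c powr (- \<alpha>)"
  define s where "s = \<rho> powr (1 - \<alpha>)"
  have "(p * (c * (\<rho> - s) + s - 1) / (\<rho> - 1) - 1) / (\<alpha> * (\<alpha> - 1)) * (c * (\<rho> - 1))
     = (c * p * (c * (\<rho> - s) + s - 1) - c * (\<rho> - 1)) / (\<alpha> * (\<alpha> - 1))"
  proof -
    have r1: "\<rho> - 1 \<noteq> 0" using r by simp
    have h: "(p * (c * (\<rho> - s) + s - 1) / (\<rho> - 1) - 1) * (c * (\<rho> - 1)) = c * p * (c * (\<rho> - s) + s - 1) - c * (\<rho> - 1)"
      using r1 by (simp add: field_simps)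
    have "(p * (c * (\<rho> - s) + s - 1) / (\<rho> - 1) - 1) / (\<alpha> * (\<alpha> - 1)) * (c * (\<rho> - 1))
      = ((p * (c * (\<rho> - s) + s - 1) / (\<rho> - 1) - 1) * (c * (\<rho> - 1))) / (\<alpha> * (\<alpha> - 1))" by simp
    then show ?thesis using h by simp
  qed
  also have "\<dots> = (c * \<rho> - 1) * ((c * p - \<alpha> + (\<alpha> - 1) * c) / (\<alpha> * (\<alpha> - 1))) +
      (1 - c) * ((c * p * s - \<alpha> + (\<alpha> - 1) * (c * \<rho>)) / (\<alpha> * (\<alpha> - 1)))"
  proof -
    have "c * p * (c * (\<rho> - s) + s - 1) - c * (\<rho> - 1) = (c * \<rho> - 1) * (c * p - \<alpha> + (\<alpha> - 1) * c) +
      (1 - c) * (c * p * s - \<alpha> + (\<alpha> - 1) * (c * \<rho>))" by (simp add: algebra_simps)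
    then show ?thesis by (simp only: times_divide_eq_right add_divide_distrib[symmetric])
  qed
  finally have eq: "(p * (c * (\<rho> - s) + s - 1) / (\<rho> - 1) - 1) / (\<alpha> * (\<alpha> - 1)) * (c * (\<rho> - 1)) = \<dots>" .
  have phic: "phi \<alpha> c = (c * p - \<alpha> + (\<alpha> - 1) * c) / (\<alpha> * (\<alpha> - 1))"
    using a by (simp add: phi_def e2 p_def)
  have phicr: "phi \<alpha> (c * \<rho>) = (c * p * s - \<alpha> + (\<alpha> - 1) * (c * \<rho>)) / (\<alpha> * (\<alpha> - 1))"
    using a by (simp add: phi_def e1 e2 p_def s_def mult.assoc)
  have "Hc \<alpha> \<rho> c = (p * (c * (\<rho> - s) + s - 1) / (\<rho> - 1) - 1) / (\<alpha> * (\<alpha> - 1))"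
    unfolding Hc_def phic phicr by (rule div_eqI[OF d]) (rule eq[symmetric])
  then show ?thesis by (simp add: p_def s_def)
qed


lemma Delta01:
  assumes r: "\<rho> > 1" and a: "\<alpha> = 0 \<or> \<alpha> = 1"
  shows "Delta \<alpha> \<rho> = \<rho> * (ln \<rho> / (\<rho> - 1)) - 1 - ln \<rho> - ln (ln \<rho> / (\<rho> - 1))"
proof -
  have L: "ln \<rho> / (\<rho> - 1) > 0" using r by simp
  have "ln (exp 1 * \<rho> * ln \<rho> / (\<rho> - 1)) = ln (exp 1 * \<rho> * (ln \<rho> / (\<rho> - 1)))" by simp
  also have "ln (exp 1 * \<rho> * (ln \<rho> / (\<rho> - 1))) = ln (exp 1 * \<rho>) + ln (ln \<rho> / (\<rho> - 1))"
    using L r by (intro ln_mult_pos) auto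
  also have "ln (exp 1 * \<rho>) = 1 + ln \<rho>" using r by (simp add: ln_mult)
  finally have "ln (exp 1 * \<rho> * ln \<rho> / (\<rho> - 1)) = 1 + ln \<rho> + ln (ln \<rho> / (\<rho> - 1))" .
  then show ?thesis using a by (simp add: Delta_def)
qed

lemma L_bounds:
  fixes \<rho> :: real
  assumes r: "\<rho> > 1"
  shows "ln \<rho> / (\<rho> - 1) \<le> 1" "\<rho> * (ln \<rho> / (\<rho> - 1)) \<ge> 1"
proof -
  show "ln \<rho> / (\<rho> - 1) \<le> 1" using r ln_le_minus_one[of \<rho>] by simp
  have "ln (1 / \<rho>) \<le> 1 / \<rho> - 1" using r by (intro ln_le_minus_one) simp
  then have "- ln \<rho> \<le> 1 / \<rho> - 1" using r by (simp add: ln_div)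
  then have "\<rho> * (- ln \<rho>) \<le> \<rho> * (1 / \<rho> - 1)" using r by (intro mult_left_mono) auto
  then have "\<rho> - 1 \<le> \<rho> * ln \<rho>" using r by (simp add: algebra_simps)
  then show "\<rho> * (ln \<rho> / (\<rho> - 1)) \<ge> 1" using r by (simp add: field_simps)
qed

lemma Hc_le_Delta_1:
  assumes c: "c > 0" and r: "\<rho> > 1"
  shows "Hc 1 \<rho> c \<le> Delta 1 \<rho>"
proof -
  define L where "L = ln \<rho> / (\<rho> - 1)"
  have Lp: "L > 0" using r by (simp add: L_def)
  have LL: "\<rho> * L - ln \<rho> = L" using r by (simp add: L_def field_simps)
  have "ln (L / c) \<le> L / c - 1" using Lp c by (intro ln_le_minus_one) simp
  then have "ln L - ln c \<le> L / c - 1" using Lp c by (simp add: ln_div)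
  then show ?thesis using c r LL
    by (simp add: Hc_1 Delta01 L_def[symmetric])
qed

lemma Hc_le_Delta_0:
  assumes c: "c > 0" and r: "\<rho> > 1"
  shows "Hc 0 \<rho> c \<le> Delta 0 \<rho>"
proof -
  define L where "L = ln \<rho> / (\<rho> - 1)"
  have Lp: "L > 0" using r by (simp add: L_def)
  have "ln (c * \<rho> * L) \<le> c * \<rho> * L - 1" using Lp c r by (intro ln_le_minus_one) simp
  then have "ln c + ln \<rho> + ln L \<le> c * \<rho> * L - 1" using Lp c r by (simp add: ln_mult)
  then show ?thesis using c r
    by (simp add: Hc_0 Delta01 L_def[symmetric] algebra_simps)
qed

lemma attain_1:
  assumes r: "\<rho> > 1"
  shows "\<exists>c\<in>{1/\<rho>..1}. Hc 1 \<rho> c = Delta 1 \<rho>"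
proof -
  define L where "L = ln \<rho> / (\<rho> - 1)"
  have Lp: "L > 0" using r by (simp add: L_def)
  have LL: "\<rho> * L - ln \<rho> = L" using r by (simp add: L_def field_simps)
  have b: "L \<le> 1" "\<rho> * L \<ge> 1" using L_bounds[OF r] by (auto simp: L_def)
  have "1 / \<rho> \<le> L" using b r by (simp add: field_simps)
  moreover have "Hc 1 \<rho> L = Delta 1 \<rho>"
    using Lp r LL by (simp add: Hc_1 Delta01 L_def[symmetric])
  ultimately show ?thesis using b by auto
qed

lemma attain_0:
  assumes r: "\<rho> > 1"
  shows "\<exists>c\<in>{1/\<rho>..1}. Hc 0 \<rho> c = Delta 0 \<rho>"
proof -
  define L where "L = ln \<rho> / (\<rho> - 1)"
  have Lp: "L > 0" using r by (simp add: L_def)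
  have b: "L \<le> 1" "\<rho> * L \<ge> 1" using L_bounds[OF r] by (auto simp: L_def)
  have c1: "1 / (\<rho> * L) \<le> 1" using b by simp
  have c2: "1 / \<rho> \<le> 1 / (\<rho> * L)" using b r Lp by (simp add: field_simps)
  have "ln (1 / (\<rho> * L)) = - ln \<rho> - ln L" using Lp r by (simp add: ln_div ln_mult)
  moreover have "(1 - 1 / (\<rho> * L)) * \<rho> * L = \<rho> * L - 1" using Lp r by (simp add: field_simps)
  ultimately have "Hc 0 \<rho> (1 / (\<rho> * L)) = Delta 0 \<rho>"
    using Lp r by (simp add: Hc_0 Delta01 L_def[symmetric])
  then show ?thesis using c1 c2 by auto
qed


lemma MP_pos:
  fixes \<alpha> \<rho> :: real
  assumes r: "\<rho> > 1" and a: "\<alpha> \<noteq> 0" "\<alpha> \<noteq> 1"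
  shows "(\<rho> powr \<alpha> - 1) / \<alpha> > 0" "(\<rho> - \<rho> powr \<alpha>) / (1 - \<alpha>) > 0"
proof -
  have A: "\<rho> powr \<alpha> < 1 \<and> \<rho> powr \<alpha> < \<rho>" if "\<alpha> < 0"
  proof -
    have "\<rho> powr \<alpha> < \<rho> powr 0" using that r by (intro powr_less_mono) auto
    moreover have "\<rho> powr \<alpha> < \<rho> powr 1" using that r by (intro powr_less_mono) auto
    ultimately show ?thesis using r by simp
  qed
  have B: "1 < \<rho> powr \<alpha> \<and> \<rho> powr \<alpha> < \<rho>" if "0 < \<alpha>" "\<alpha> < 1"
  proof -
    have "\<rho> powr 0 < \<rho> powr \<alpha>" using that r by (intro powr_less_mono) auto
    moreover have "\<rho> powr \<alpha> < \<rho> powr 1" using that r by (intro powr_less_mono) auto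
    ultimately show ?thesis using r by simp
  qed
  have C: "1 < \<rho> powr \<alpha> \<and> \<rho> < \<rho> powr \<alpha>" if "1 < \<alpha>"
  proof -
    have "\<rho> powr 0 < \<rho> powr \<alpha>" using that r by (intro powr_less_mono) auto
    moreover have "\<rho> powr 1 < \<rho> powr \<alpha>" using that r by (intro powr_less_mono) auto
    ultimately show ?thesis using r by simp
  qed
  have cs: "\<alpha> < 0 \<or> (0 < \<alpha> \<and> \<alpha> < 1) \<or> 1 < \<alpha>" using a by linarith
  show "(\<rho> powr \<alpha> - 1) / \<alpha> > 0" using A B C cs by (auto simp: zero_less_divide_iff)
  show "(\<rho> - \<rho> powr \<alpha>) / (1 - \<alpha>) > 0" using A B C cs by (auto simp: zero_less_divide_iff)
qed

lemma Hc_gen_x: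
  fixes \<alpha> \<rho> x :: real
  assumes r: "\<rho> > 1" and a: "\<alpha> \<noteq> 0" "\<alpha> \<noteq> 1" and x: "x > 0"
  defines "M \<equiv> (\<rho> powr \<alpha> - 1) / \<alpha>" and "P \<equiv> (\<rho> - \<rho> powr \<alpha>) / (1 - \<alpha>)"
  shows "Hc \<alpha> \<rho> (x * P / (\<rho> * M)) =
    (M powr \<alpha> * P powr (1 - \<alpha>) * (x powr (- \<alpha>) * (\<alpha> * x + 1 - \<alpha>)) / (\<rho> - 1) - 1) / (\<alpha> * (\<alpha> - 1))"
proof -
  have Mp: "M > 0" and Pp: "P > 0" using MP_pos[OF r a] by (auto simp: M_def P_def)
  define t where "t = \<rho> powr \<alpha>"
  have tp: "t > 0" using r by (simp add: t_def)
  have aM: "\<alpha> * M = t - 1" using a by (simp add: M_def t_def)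
  have aP: "(1 - \<alpha>) * P = \<rho> - t" using a by (simp add: P_def t_def)
  define c where "c = x * P / (\<rho> * M)"
  have cp: "c > 0" using x Pp Mp r by (simp add: c_def)
  have r1: "\<rho> powr (1 - \<alpha>) = \<rho> / t" using r by (simp add: t_def powr_diff)
  have cpow: "c powr (- \<alpha>) = x powr (- \<alpha>) * P powr (- \<alpha>) * t * M powr \<alpha>"
    using x Pp Mp r
    by (simp add: c_def t_def powr_mult powr_divide powr_minus divide_simps)
  have Ppow: "P powr (1 - \<alpha>) = P * P powr (- \<alpha>)"
  proof -
    have "P powr (1 + - \<alpha>) = P powr 1 * P powr (- \<alpha>)" by (rule powr_add)
    then show ?thesis using Pp by simp
  qed
  have key: "t * (c * (\<rho> - \<rho> / t) + \<rho> / t - 1) = P * (\<alpha> * x + 1 - \<alpha>)"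
  proof -
    have "t * (c * (\<rho> - \<rho> / t) + \<rho> / t - 1) = c * \<rho> * (t - 1) + (\<rho> - t)"
      using tp by (simp add: field_simps)
    also have "c * \<rho> * (t - 1) = x * P * \<alpha>"
      using Mp r aM[symmetric] by (simp add: c_def field_simps)
    finally show ?thesis using aP by (simp add: algebra_simps)
  qed
  have "c powr (- \<alpha>) * (c * (\<rho> - \<rho> powr (1 - \<alpha>)) + \<rho> powr (1 - \<alpha>) - 1)
     = x powr (- \<alpha>) * P powr (- \<alpha>) * M powr \<alpha> * (t * (c * (\<rho> - \<rho> / t) + \<rho> / t - 1))"
    by (simp add: cpow r1 mult_ac)
  also have "\<dots> = M powr \<alpha> * P powr (1 - \<alpha>) * (x powr (- \<alpha>) * (\<alpha> * x + 1 - \<alpha>))"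
    by (simp add: key Ppow mult_ac)
  finally have eq: "c powr (- \<alpha>) * (c * (\<rho> - \<rho> powr (1 - \<alpha>)) + \<rho> powr (1 - \<alpha>) - 1)
     = M powr \<alpha> * P powr (1 - \<alpha>) * (x powr (- \<alpha>) * (\<alpha> * x + 1 - \<alpha>))" .
  show ?thesis
    using Hc_gen[OF cp r a] eq by (simp add: c_def)
qed

lemma Delta_gen:
  fixes \<alpha> \<rho> :: real
  assumes a: "\<alpha> \<noteq> 0" "\<alpha> \<noteq> 1"
  defines "M \<equiv> (\<rho> powr \<alpha> - 1) / \<alpha>" and "P \<equiv> (\<rho> - \<rho> powr \<alpha>) / (1 - \<alpha>)"
  shows "Delta \<alpha> \<rho> = (M powr \<alpha> * P powr (1 - \<alpha>) / (\<rho> - 1) - 1) / (\<alpha> * (\<alpha> - 1))"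
  using a by (simp add: Delta_def M_def P_def)

lemma Hc_le_Delta_gen:
  fixes \<alpha> \<rho> c :: real
  assumes r: "\<rho> > 1" and a: "\<alpha> \<noteq> 0" "\<alpha> \<noteq> 1" and c: "c > 0"
  shows "Hc \<alpha> \<rho> c \<le> Delta \<alpha> \<rho>"
proof -
  define M where "M = (\<rho> powr \<alpha> - 1) / \<alpha>"
  define P where "P = (\<rho> - \<rho> powr \<alpha>) / (1 - \<alpha>)"
  have Mp: "M > 0" and Pp: "P > 0" using MP_pos[OF r a] by (auto simp: M_def P_def)
  define x where "x = c * \<rho> * M / P"
  have xp: "x > 0" using c r Mp Pp by (simp add: x_def)
  have cx: "c = x * P / (\<rho> * M)" using Mp Pp r by (simp add: x_def)
  define K where "K = M powr \<alpha> * P powr (1 - \<alpha>) / (\<rho> - 1)"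
  have Kp: "K > 0" using Mp Pp r by (simp add: K_def)
  define y where "y = x powr (- \<alpha>) * (\<alpha> * x + 1 - \<alpha>)"
  have H: "Hc \<alpha> \<rho> c = (K * y - 1) / (\<alpha> * (\<alpha> - 1))"
    unfolding cx using Hc_gen_x[OF r a xp] by (simp add: M_def P_def K_def y_def)
  have D: "Delta \<alpha> \<rho> = (K - 1) / (\<alpha> * (\<alpha> - 1))"
    using Delta_gen[OF a] by (simp add: M_def P_def K_def)
  have inv: "x powr (- \<alpha>) * x powr \<alpha> = 1" using xp by (simp add: powr_minus)
  have xm: "x powr (- \<alpha>) > 0" using xp by simp
  consider "\<alpha> * (\<alpha> - 1) > 0" | "\<alpha> * (\<alpha> - 1) < 0" using a by (cases "\<alpha> * (\<alpha> - 1)" "0::real" rule: linorder_cases) auto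
  then show ?thesis
  proof cases
    case 1
    then have "\<alpha> \<le> 0 \<or> \<alpha> \<ge> 1" by (auto simp: zero_less_mult_iff)
    from bern_convex[OF xp this] have "\<alpha> * x + 1 - \<alpha> \<le> x powr \<alpha>" by (simp add: algebra_simps)
    then have "y \<le> 1" unfolding y_def using xm inv
      by (metis mult_left_mono less_imp_le)
    then have "K * y - 1 \<le> K - 1" using Kp by (simp add: mult_left_le)
    then show ?thesis unfolding H D using 1 by (simp add: divide_right_mono)
  next
    case 2
    then have "0 \<le> \<alpha>" "\<alpha> \<le> 1" by (auto simp: mult_less_0_iff)
    from bern_concave[OF xp this] have "x powr \<alpha> \<le> \<alpha> * x + 1 - \<alpha>" by (simp add: algebra_simps)
    then have "1 \<le> y" unfolding y_def using xm inv
      by (metis mult_left_mono less_imp_le)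
    then have "K - 1 \<le> K * y - 1" using Kp by simp
    then show ?thesis unfolding H D using 2 by (simp add: divide_right_mono_neg)
  qed
qed

lemma attain_gen:
  fixes \<alpha> \<rho> :: real
  assumes r: "\<rho> > 1" and a: "\<alpha> \<noteq> 0" "\<alpha> \<noteq> 1"
  shows "\<exists>c\<in>{1/\<rho>..1}. Hc \<alpha> \<rho> c = Delta \<alpha> \<rho>"
proof -
  define M where "M = (\<rho> powr \<alpha> - 1) / \<alpha>"
  define P where "P = (\<rho> - \<rho> powr \<alpha>) / (1 - \<alpha>)"
  have Mp: "M > 0" and Pp: "P > 0" using MP_pos[OF r a] by (auto simp: M_def P_def)
  have HD: "Hc \<alpha> \<rho> (1 * P / (\<rho> * M)) = Delta \<alpha> \<rho>"
    using Hc_gen_x[OF r a, of 1] Delta_gen[OF a] by (simp add: M_def P_def)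
  define t where "t = \<rho> powr \<alpha>"
  have tp: "t > 0" using r by (simp add: t_def)
  have u: "(1 / \<rho>) powr \<alpha> = 1 / t" using r by (simp add: t_def powr_divide)
  have cs: "\<alpha> < 0 \<or> (0 < \<alpha> \<and> \<alpha> < 1) \<or> 1 < \<alpha>" using a by linarith
  have rp: "\<rho> > 0" "1 / \<rho> > 0" using r by auto
  have e1: "\<rho> * t * (1 + \<alpha> * (1 / \<rho> - 1)) = \<rho> * t + \<alpha> * t - \<alpha> * \<rho> * t"
    using rp by (simp add: field_simps)
  have e2: "\<rho> * t * (1 / t) = \<rho>" using tp by simp
  moreover have "M \<le> P"
    using cs
  proof (elim disjE conjE)
    assume h: "\<alpha> < 0"
    have "1 + \<alpha> * (\<rho> - 1) \<le> t" using bern_convex[OF rp(1), of \<alpha>] h by (simp add: t_def)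
    then show ?thesis using h unfolding M_def P_def t_def[symmetric] by (simp add: field_simps)
  next
    assume h: "0 < \<alpha>" "\<alpha> < 1"
    have "t \<le> 1 + \<alpha> * (\<rho> - 1)" using bern_concave[OF rp(1), of \<alpha>] h by (simp add: t_def)
    then show ?thesis using h unfolding M_def P_def t_def[symmetric] by (simp add: field_simps)
  next
    assume h: "1 < \<alpha>"
    have "1 + \<alpha> * (\<rho> - 1) \<le> t" using bern_convex[OF rp(1), of \<alpha>] h by (simp add: t_def)
    then show ?thesis using h unfolding M_def P_def t_def[symmetric] by (simp add: field_simps)
  qed
  moreover have "P \<le> \<rho> * M"
    using cs
  proof (elim disjE conjE)
    assume h: "\<alpha> < 0"
    have "1 + \<alpha> * (1 / \<rho> - 1) \<le> 1 / t" using bern_convex[OF rp(2), of \<alpha>] h u by simp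
    then have "\<rho> * t * (1 + \<alpha> * (1 / \<rho> - 1)) \<le> \<rho> * t * (1 / t)" using rp tp by (intro mult_left_mono) auto
    then have "\<rho> * t + \<alpha> * t - \<alpha> * \<rho> * t \<le> \<rho>" unfolding e1 e2 .
    then show ?thesis using h unfolding M_def P_def t_def[symmetric] by (simp add: field_simps)
  next
    assume h: "0 < \<alpha>" "\<alpha> < 1"
    have "1 / t \<le> 1 + \<alpha> * (1 / \<rho> - 1)" using bern_concave[OF rp(2), of \<alpha>] h u by simp
    then have "\<rho> * t * (1 / t) \<le> \<rho> * t * (1 + \<alpha> * (1 / \<rho> - 1))" using rp tp by (intro mult_left_mono) auto
    then have "\<rho> \<le> \<rho> * t + \<alpha> * t - \<alpha> * \<rho> * t" unfolding e1 e2 .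
    then show ?thesis using h unfolding M_def P_def t_def[symmetric] by (simp add: field_simps)
  next
    assume h: "1 < \<alpha>"
    have "1 + \<alpha> * (1 / \<rho> - 1) \<le> 1 / t" using bern_convex[OF rp(2), of \<alpha>] h u by simp
    then have "\<rho> * t * (1 + \<alpha> * (1 / \<rho> - 1)) \<le> \<rho> * t * (1 / t)" using rp tp by (intro mult_left_mono) auto
    then have "\<rho> * t + \<alpha> * t - \<alpha> * \<rho> * t \<le> \<rho>" unfolding e1 e2 .
    then show ?thesis using h unfolding M_def P_def t_def[symmetric] by (simp add: field_simps)
  qed
  ultimately show ?thesis using Mp Pp r HD
    by (intro bexI[of _ "1 * P / (\<rho> * M)"]) (auto simp: field_simps)
qed


lemma Hc_le_Delta:
  assumes r: "\<rho> > 1" and c: "c > 0"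
  shows "Hc \<alpha> \<rho> c \<le> Delta \<alpha> \<rho>"
  using Hc_le_Delta_0[OF c r] Hc_le_Delta_1[OF c r] Hc_le_Delta_gen[OF r _ _ c]
  by (cases "\<alpha> = 0"; cases "\<alpha> = 1") auto

lemma attain:
  assumes r: "\<rho> > 1"
  shows "\<exists>c\<in>{1/\<rho>..1}. Hc \<alpha> \<rho> c = Delta \<alpha> \<rho>"
  using attain_0[OF r] attain_1[OF r] attain_gen[OF r]
  by (cases "\<alpha> = 0"; cases "\<alpha> = 1") auto

lemma phi_cont: "continuous_on {0<..} (phi \<alpha>)"
  unfolding phi_def
  by (cases "\<alpha> = 0"; cases "\<alpha> = 1") (auto intro!: continuous_intros)

lemma Hc_cont:
  assumes r: "\<rho> > 1" and c: "c > 0"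
  shows "isCont (Hc \<alpha> \<rho>) c"
proof -
  have "continuous_on {0<..} (Hc \<alpha> \<rho>)"
    unfolding Hc_def
  proof (intro continuous_intros)
    show "continuous_on {0<..} (phi \<alpha>)" by (rule phi_cont)
    show "continuous_on {0<..} (\<lambda>x. phi \<alpha> (x * \<rho>))"
      by (rule continuous_on_compose2[OF phi_cont]) (use r in \<open>auto intro!: continuous_intros\<close>)
  qed (use r in auto)
  then show ?thesis using c
    by (simp add: continuous_on_eq_continuous_at)
qed


lemma DA_term:
  assumes n: "n \<ge> 1" and q: "q > 0"
  shows "q * u_alpha \<alpha> ((1 / real n) / q) = (1 / real n) * phi \<alpha> (real n * q)"
proof -
  have np: "real n > 0" using n by simp
  have "phi \<alpha> (real n * q) = real n * q * u_alpha \<alpha> (1 / (real n * q))"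
    using phi_eq[of "real n * q" \<alpha>] np q by simp
  then show ?thesis using np by simp
qed

lemma DA_le_Hc:
  assumes r: "\<rho> > 1" and n: "n \<ge> 1" and Q: "Q \<in> Pn n \<rho>"
  shows "DA \<alpha> n (U_unif n) Q \<le> Hc \<alpha> \<rho> (real n * Min (Q ` {1..n}))"
    and "real n * Min (Q ` {1..n}) > 0"
proof -
  let ?S = "{1..n}"
  have pos: "\<And>x. x \<in> ?S \<Longrightarrow> Q x > 0" and sum1: "(\<Sum>x\<in>?S. Q x) = 1"
    and rat: "Max (Q ` ?S) / Min (Q ` ?S) \<le> \<rho>"
    using Q by (auto simp: Pn_def)
  have fin: "finite (Q ` ?S)" and ne: "Q ` ?S \<noteq> {}" using n by auto
  define m where "m = Min (Q ` ?S)"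
  define Mx where "Mx = Max (Q ` ?S)"
  have mp: "m > 0" unfolding m_def using Min_in[OF fin ne] pos by auto
  have mle: "\<And>x. x \<in> ?S \<Longrightarrow> m \<le> Q x" unfolding m_def using fin by auto
  have Mge: "\<And>x. x \<in> ?S \<Longrightarrow> Q x \<le> Mx" unfolding Mx_def using fin by auto
  have rat': "Mx / m \<le> \<rho>" using rat unfolding m_def[symmetric] Mx_def[symmetric] .
  have Mle: "Mx \<le> \<rho> * m" using rat' mp by (simp add: divide_le_eq)
  have np: "real n > 0" using n by simp
  define a where "a = real n * m"
  define b where "b = a * \<rho>"
  have ap: "a > 0" using np mp by (simp add: a_def)
  have ab: "a < b" using ap r by (simp add: b_def)
  have conv: "convex_on {a..b} (phi \<alpha>)"
    by (rule convex_on_subset[OF convex_phi]) (use ap in auto)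
  have inI: "real n * Q x \<in> {a..b}" if "x \<in> ?S" for x
  proof -
    have "m \<le> Q x" "Q x \<le> \<rho> * m" using mle[OF that] Mge[OF that] Mle by auto
    then show ?thesis using np by (auto simp: a_def b_def mult.commute)
  qed
  define s where "s = (phi \<alpha> b - phi \<alpha> a) / (b - a)"
  have bnd: "phi \<alpha> (real n * Q x) \<le> s * (real n * Q x - a) + phi \<alpha> a" if "x \<in> ?S" for x
    using convex_onD_Icc'[OF conv inI[OF that]] by (simp add: s_def)
  have "DA \<alpha> n (U_unif n) Q = (\<Sum>x\<in>?S. (1 / real n) * phi \<alpha> (real n * Q x))"
    unfolding DA_def U_unif_def
    by (rule sum.cong) (use pos n DA_term in auto)
  also have "\<dots> \<le> (\<Sum>x\<in>?S. (1 / real n) * (s * (real n * Q x - a) + phi \<alpha> a))"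
  proof (rule sum_mono)
    fix x assume "x \<in> ?S"
    then show "(1 / real n) * phi \<alpha> (real n * Q x) \<le> (1 / real n) * (s * (real n * Q x - a) + phi \<alpha> a)"
      using bnd np by (intro mult_left_mono) auto
  qed
  also have "\<dots> = s * ((\<Sum>x\<in>?S. Q x) - a) + phi \<alpha> a"
  proof -
    have e: "(1 / real n) * (s * (real n * Q x - a) + phi \<alpha> a) = s * Q x + (phi \<alpha> a - s * a) / real n" for x
      using np by (simp add: field_simps)
    have "(\<Sum>x\<in>?S. (1 / real n) * (s * (real n * Q x - a) + phi \<alpha> a))
       = (\<Sum>x\<in>?S. s * Q x) + (\<Sum>x\<in>?S. (phi \<alpha> a - s * a) / real n)"
      unfolding e by (rule sum.distrib)
    also have "\<dots> = s * (\<Sum>x\<in>?S. Q x) + (phi \<alpha> a - s * a)"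
      using np by (simp add: sum_distrib_left)
    finally show ?thesis using sum1 by (simp add: algebra_simps)
  qed
  also have "\<dots> = s * (1 - a) + phi \<alpha> a" by (simp only: sum1)
  also have "\<dots> = Hc \<alpha> \<rho> a"
  proof -
    have d: "b - a \<noteq> 0" "a * (\<rho> - 1) = b - a" using ab by (auto simp: b_def algebra_simps)
    show ?thesis unfolding Hc_def s_def d(2) b_def[symmetric] using d(1)
      by (simp add: field_simps)
  qed
  finally show "DA \<alpha> n (U_unif n) Q \<le> Hc \<alpha> \<rho> (real n * Min (Q ` {1..n}))"
    by (simp add: a_def m_def)
  show "real n * Min (Q ` {1..n}) > 0" using ap by (simp add: a_def m_def)
qed

lemma DA_le_Delta:
  assumes r: "\<rho> > 1" and n: "n \<ge> 1" and Q: "Q \<in> Pn n \<rho>"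
  shows "DA \<alpha> n (U_unif n) Q \<le> Delta \<alpha> \<rho>"
  using DA_le_Hc[OF r n Q] Hc_le_Delta[OF r] order_trans by blast


lemma sum_if_k:
  fixes A B :: real
  assumes "k \<le> n"
  shows "(\<Sum>x\<in>{1..n}. if x \<le> k then A else B) = real k * A + (real n - real k) * B"
proof -
  have "(\<Sum>x\<in>{1..n}. if x \<le> k then A else B) = (\<Sum>x\<in>{1..n} \<inter> {x. x \<le> k}. A) + (\<Sum>x\<in>{1..n} \<inter> - {x. x \<le> k}. B)"
    by (rule sum.If_cases) simp
  also have "{1..n} \<inter> {x. x \<le> k} = {1..k}" using assms by auto
  also have "{1..n} \<inter> - {x. x \<le> k} = {k+1..n}" using assms by auto
  finally show ?thesis using assms by (simp add: of_nat_diff)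
qed

lemma construct:
  fixes \<rho> :: real and n k :: nat
  assumes r: "\<rho> > 1" and n: "n \<ge> 1" and k: "k \<le> n"
  defines "D \<equiv> real k * \<rho> + (real n - real k)"
  defines "Q \<equiv> (\<lambda>x. if x \<in> {1..n} then (if x \<le> k then \<rho> else 1) / D else 0)"
  shows "Q \<in> Pn n \<rho>" and "DA \<alpha> n (U_unif n) Q = Hc \<alpha> \<rho> (real n / D)"
proof -
  have kn: "real k \<le> real n" using k by simp
  have np: "real n > 0" using n by simp
  have Dn: "D = real n + real k * (\<rho> - 1)" by (simp add: D_def algebra_simps)
  have Dp: "D > 0" unfolding Dn using np r by (simp add: add_pos_nonneg)
  let ?S = "{1..n}"
  have pos: "\<forall>x\<in>?S. Q x > 0" using Dp r by (auto simp: Q_def)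
  have out: "\<forall>x. x \<notin> ?S \<longrightarrow> Q x = 0" by (simp add: Q_def)
  have "(\<Sum>x\<in>?S. Q x) = (\<Sum>x\<in>?S. if x \<le> k then \<rho> / D else 1 / D)"
    by (rule sum.cong) (auto simp: Q_def)
  also have "\<dots> = real k * (\<rho> / D) + (real n - real k) * (1 / D)" by (rule sum_if_k[OF k])
  also have "\<dots> = (real k * \<rho> + (real n - real k)) / D" using Dp by (simp add: field_simps)
  also have "\<dots> = 1" using Dp unfolding D_def[symmetric] by simp
  finally have s1: "(\<Sum>x\<in>?S. Q x) = 1" .
  have fin: "finite (Q ` ?S)" and ne: "Q ` ?S \<noteq> {}" using n by auto
  have Mx: "Max (Q ` ?S) \<le> \<rho> / D"
    using fin ne r Dp by (auto simp: Q_def Max_le_iff divide_right_mono)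
  have Mn: "1 / D \<le> Min (Q ` ?S)"
    using fin ne r Dp by (auto simp: Q_def Min_ge_iff divide_right_mono)
  have "Max (Q ` ?S) / Min (Q ` ?S) \<le> (\<rho> / D) / (1 / D)"
    by (rule frac_le) (use Mx Mn Dp r in auto)
  also have "\<dots> = \<rho>" using Dp by simp
  finally have rat: "Max (Q ` ?S) / Min (Q ` ?S) \<le> \<rho>" .
  show "Q \<in> Pn n \<rho>" unfolding Pn_def using pos out s1 rat by blast
  define c where "c = real n / D"
  have cp: "c > 0" using np Dp by (simp add: c_def)
  have "DA \<alpha> n (U_unif n) Q = (\<Sum>x\<in>?S. (1 / real n) * phi \<alpha> (real n * Q x))"
    unfolding DA_def U_unif_def
    by (rule sum.cong) (use pos n DA_term in auto)
  also have "\<dots> = (\<Sum>x\<in>?S. if x \<le> k then (1 / real n) * phi \<alpha> (c * \<rho>) else (1 / real n) * phi \<alpha> c)"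
    by (rule sum.cong) (auto simp: Q_def c_def)
  also have "\<dots> = real k * ((1 / real n) * phi \<alpha> (c * \<rho>)) + (real n - real k) * ((1 / real n) * phi \<alpha> c)"
    using k by (rule sum_if_k)
  also have "\<dots> = Hc \<alpha> \<rho> c"
  proof -
    have d: "c * (\<rho> - 1) \<noteq> 0" using cp r by simp
    have e1: "c * \<rho> - 1 = (real n - real k) * (\<rho> - 1) / D" using Dp by (simp add: c_def Dn field_simps)
    have e2: "1 - c = real k * (\<rho> - 1) / D" using Dp by (simp add: c_def Dn field_simps)
    show ?thesis unfolding Hc_def e1 e2 using d Dp np r
      by (intro div_eqI[symmetric] d) (simp add: c_def field_simps)
  qed
  finally show "DA \<alpha> n (U_unif n) Q = Hc \<alpha> \<rho> (real n / D)" by (simp add: c_def)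
qed


theorem corollary1:
  fixes \<alpha> \<rho> :: real
  assumes "\<rho> > 1"
  shows "(\<lambda>n. SUP Q\<in>Pn n \<rho>. DA \<alpha> n (U_unif n) Q) \<longlonglongrightarrow> Delta \<alpha> \<rho>"
proof -
  note r = assms
  obtain c0 where c0: "c0 \<in> {1/\<rho>..1}" and Hc0: "Hc \<alpha> \<rho> c0 = Delta \<alpha> \<rho>"
    using attain[OF r] by blast
  have c0p: "c0 > 0" using c0 r by (auto intro: less_le_trans[of 0 "1/\<rho>"])
  have c0r: "1 \<le> c0 * \<rho>" using c0 r by (auto simp: field_simps)
  define \<theta> where "\<theta> = (1 - c0) / (c0 * (\<rho> - 1))"
  have th0: "0 \<le> \<theta>" using c0 c0p r by (auto simp: \<theta>_def)
  have th1: "\<theta> \<le> 1" using c0r c0p r by (simp add: \<theta>_def field_simps)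
  have thc: "1 / (1 + \<theta> * (\<rho> - 1)) = c0" using c0p r by (simp add: \<theta>_def field_simps)
  define kf where "kf n = nat \<lfloor>real n * \<theta>\<rfloor>" for n
  have kf_eq: "real (kf n) = of_int \<lfloor>real n * \<theta>\<rfloor>" for n
    using th0 by (simp add: kf_def)
  have kf_le: "kf n \<le> n" for n
  proof -
    have "real (kf n) \<le> real n * \<theta>" unfolding kf_eq by simp
    also have "\<dots> \<le> real n" using th1 by (simp add: mult_left_le)
    finally show ?thesis by simp
  qed
  have kf_ge: "real n * \<theta> - 1 \<le> real (kf n)" for n
    unfolding kf_eq by linarith
  define h where "h n = real (kf n) / real n" for n
  have h_lim: "h \<longlonglongrightarrow> \<theta>"
  proof (rule tendsto_sandwich[of "\<lambda>n. \<theta> - 1 / real n" h sequentially "\<lambda>n. \<theta>"])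
    show "\<forall>\<^sub>F n in sequentially. \<theta> - 1 / real n \<le> h n"
      using eventually_ge_at_top[of "1::nat"]
    proof (rule eventually_mono)
      fix n :: nat assume n: "1 \<le> n"
      have e: "\<theta> - 1 / real n = (real n * \<theta> - 1) / real n" using n by (simp add: field_simps)
      show "\<theta> - 1 / real n \<le> h n"
        unfolding e h_def using kf_ge[of n] by (intro divide_right_mono) auto
    qed
    show "\<forall>\<^sub>F n in sequentially. h n \<le> \<theta>"
      using eventually_ge_at_top[of "1::nat"]
    proof (rule eventually_mono)
      fix n :: nat assume n: "1 \<le> n"
      have "real (kf n) \<le> real n * \<theta>" unfolding kf_eq by simp
      then show "h n \<le> \<theta>" using n by (simp add: h_def field_simps)
    qed
    show "(\<lambda>n. \<theta> - 1 / real n) \<longlonglongrightarrow> \<theta>"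
      using tendsto_diff[OF tendsto_const lim_1_over_n, of \<theta>] by simp
  qed simp
  define g where "g n = real n / (real (kf n) * \<rho> + (real n - real (kf n)))" for n
  have "(\<lambda>n. 1 / (1 + h n * (\<rho> - 1))) \<longlonglongrightarrow> 1 / (1 + \<theta> * (\<rho> - 1))"
  proof (intro tendsto_intros h_lim)
    have "0 \<le> \<theta> * (\<rho> - 1)" using th0 r by simp
    then show "1 + \<theta> * (\<rho> - 1) \<noteq> 0" by linarith
  qed
  then have "(\<lambda>n. 1 / (1 + h n * (\<rho> - 1))) \<longlonglongrightarrow> c0" using thc by simp
  moreover have "\<forall>\<^sub>F n in sequentially. 1 / (1 + h n * (\<rho> - 1)) = g n"
    using eventually_ge_at_top[of "1::nat"]
  proof (rule eventually_mono)
    fix n :: nat assume n: "1 \<le> n"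
    then show "1 / (1 + h n * (\<rho> - 1)) = g n"
      by (simp add: h_def g_def field_simps)
  qed
  ultimately have g_lim: "g \<longlonglongrightarrow> c0" by (rule Lim_transform_eventually)
  have low_lim: "(\<lambda>n. Hc \<alpha> \<rho> (g n)) \<longlonglongrightarrow> Delta \<alpha> \<rho>"
    using isCont_tendsto_compose[OF Hc_cont[OF r c0p, of \<alpha>] g_lim] Hc0 by simp
  show ?thesis
  proof (rule tendsto_sandwich[OF _ _ low_lim tendsto_const])
    show "\<forall>\<^sub>F n in sequentially. Hc \<alpha> \<rho> (g n) \<le> (SUP Q\<in>Pn n \<rho>. DA \<alpha> n (U_unif n) Q)"
      using eventually_ge_at_top[of "1::nat"]
    proof (rule eventually_mono)
      fix n :: nat assume n: "1 \<le> n"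
      have bdd: "bdd_above ((\<lambda>Q. DA \<alpha> n (U_unif n) Q) ` Pn n \<rho>)"
        by (rule bdd_aboveI2[where M = "Delta \<alpha> \<rho>"]) (rule DA_le_Delta[OF r n])
      note C = construct[OF r n kf_le[of n]]
      have "Hc \<alpha> \<rho> (g n) = DA \<alpha> n (U_unif n) (\<lambda>x. if x \<in> {1..n} then (if x \<le> kf n then \<rho> else 1) / (real (kf n) * \<rho> + (real n - real (kf n))) else 0)"
        using C(2) by (simp add: g_def)
      also have "\<dots> \<le> (SUP Q\<in>Pn n \<rho>. DA \<alpha> n (U_unif n) Q)"
        by (rule cSUP_upper[OF C(1) bdd])
      finally show "Hc \<alpha> \<rho> (g n) \<le> (SUP Q\<in>Pn n \<rho>. DA \<alpha> n (U_unif n) Q)" .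
    qed
    show "\<forall>\<^sub>F n in sequentially. (SUP Q\<in>Pn n \<rho>. DA \<alpha> n (U_unif n) Q) \<le> Delta \<alpha> \<rho>"
      using eventually_ge_at_top[of "1::nat"]
    proof (rule eventually_mono)
      fix n :: nat assume n: "1 \<le> n"
      have ne: "Pn n \<rho> \<noteq> {}" using construct(1)[OF r n, of 0] by blast
      show "(SUP Q\<in>Pn n \<rho>. DA \<alpha> n (U_unif n) Q) \<le> Delta \<alpha> \<rho>"
        by (rule cSUP_least[OF ne]) (rule DA_le_Delta[OF r n])
    qed
  qed
qed

end
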